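(* Let $K\ge 1$, $D\ge 1$, reservoir sizes $N^{(1)},\dots,N^{(K)}\ge 1$, encoder sizes $M^{(1)},\dots,M^{(K-1)}\ge 1$, and a leak rate $\gamma\in(0,1]$ be fixed. Let $\mathbf{W}^{res(i)}\in\mathbb{R}^{N^{(i)}\times N^{(i)}}$ ($i=1,\dots,K$), $\mathbf{W}^{in(1)}\in\mathbb{R}^{N^{(1)}\times D}$, $\mathbf{W}^{in(i)}\in\mathbb{R}^{N^{(i)}\times M^{(i-1)}}$ ($i=2,\dots,K$) and $\mathbf{W}^{enc(j)}\in\mathbb{R}^{M^{(j)}\times N^{(j)}}$ ($j=1,\dots,K-1$) be fixed real matrices. Consider the Deep-ESN dynamics defined below, with $f=\tanh$ applied componentwise. Suppose that for every $i=1,\dots,K$ the largest singular value satisfies $\overline{\sigma}(\mathbf{W}^{res(i)})<1$. Then for every input sequence $(\mathbf{u}(t))_{t\ge 1}$ in $\mathbb{R}^D$ and any two choices of initial states $\{\mathbf{x}^{(i)}_{res}(0)\}_{i=1}^K$ and $\{\widetilde{\mathbf{x}}^{(i)}_{res}(0)\}_{i=1}^K$, the two resulting state trajectories (driven by the same input sequence) satisfy $$\lim_{t\to\infty}\|\mathbf{x}^{(i)}_{res}(t)-\widetilde{\mathbf{x}}^{(i)}_{res}(t)\|_2=0\quad\text{for all } i=1,\dots,K,$$ i.e. the Deep-ESN has the echo-state property.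
   Context: Deep-ESN dynamics (with linear encoders): for $t\ge 0$ and $i=1,\dots,K$, $$\mathbf{x}^{(i)}_{res}(t+1)=(1-\gamma)\,\mathbf{x}^{(i)}_{res}(t)+\gamma\, f\big(\mathbf{W}^{res(i)}\mathbf{x}^{(i)}_{res}(t)+\mathbf{W}^{in(i)}\mathbf{x}^{(i)}_{in}(t+1)\big),$$ where $\mathbf{x}^{(1)}_{in}(t+1)=\mathbf{u}(t+1)$ and, for $i\ge 2$, $\mathbf{x}^{(i)}_{in}(t+1)=\mathbf{x}^{(i-1)}_{enc}(t+1)$ with the (linear) encoder output $\mathbf{x}^{(j)}_{enc}(t)=\mathbf{W}^{enc(j)}\mathbf{x}^{(j)}_{res}(t)$. The tilde trajectory is defined by the same equations with the same input $\mathbf{u}$ but different initial reservoir states. $f=\tanh$ is applied componentwise and is 1-Lipschitz. $\overline{\sigma}(\mathbf{A})$ denotes the largest singular value (operator 2-norm) of a matrix $\mathbf{A}$. *)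

theory Defs
  imports Complex_Main
begin

text \<open>Layer dimensions vary with the layer index, so vectors are represented as
  functions nat => real (only indices below the dimension matter) and matrices as
  nat => nat => real (row, column).\<close>

definition matvec :: "(nat \<Rightarrow> nat \<Rightarrow> real) \<Rightarrow> nat \<Rightarrow> (nat \<Rightarrow> real) \<Rightarrow> (nat \<Rightarrow> real)" where
  "matvec A n x = (\<lambda>r. \<Sum>c<n. A r c * x c)"

definition vnorm :: "nat \<Rightarrow> (nat \<Rightarrow> real) \<Rightarrow> real" where
  "vnorm n x = sqrt (\<Sum>i<n. (x i)\<^sup>2)"

text \<open>Largest singular value (operator 2-norm) of an m x n matrix.\<close>
definition sigma_max :: "nat \<Rightarrow> nat \<Rightarrow> (nat \<Rightarrow> nat \<Rightarrow> real) \<Rightarrow> real" where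
  "sigma_max m n A = (SUP x\<in>{x. vnorm n x \<le> 1}. vnorm m (matvec A n x))"

text \<open>x t i is the reservoir state of layer i (1..K) at time t; u t is the input at time t.\<close>
definition deep_esn_traj ::
  "nat \<Rightarrow> nat \<Rightarrow> (nat \<Rightarrow> nat) \<Rightarrow> (nat \<Rightarrow> nat) \<Rightarrow> real
   \<Rightarrow> (nat \<Rightarrow> nat \<Rightarrow> nat \<Rightarrow> real) \<Rightarrow> (nat \<Rightarrow> nat \<Rightarrow> nat \<Rightarrow> real) \<Rightarrow> (nat \<Rightarrow> nat \<Rightarrow> nat \<Rightarrow> real)
   \<Rightarrow> (nat \<Rightarrow> nat \<Rightarrow> real) \<Rightarrow> (nat \<Rightarrow> nat \<Rightarrow> nat \<Rightarrow> real) \<Rightarrow> bool" where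
  "deep_esn_traj K D N M \<gamma> Wres Win Wenc u x \<longleftrightarrow>
     (\<forall>t. \<forall>i\<in>{1..K}. \<forall>r<N i.
        x (Suc t) i r =
          (1 - \<gamma>) * x t i r
          + \<gamma> * tanh (matvec (Wres i) (N i) (x t i) r
               + (if i = 1 then matvec (Win 1) D (u (Suc t)) r
                  else matvec (Win i) (M (i - 1))
                         (matvec (Wenc (i - 1)) (N (i - 1)) (x (Suc t) (i - 1))) r)))"

end

theory Submission
  imports Defs "HOL-Analysis.L2_Norm"
begin

lemma tanh_lip: "\<bar>tanh a - tanh b\<bar> \<le> \<bar>a - b::real\<bar>"
proof -
  have key: "tanh q - tanh p \<le> q - p \<and> 0 \<le> tanh q - tanh p" if pq: "p < q" for p q :: real
  proof -
    have deriv: "DERIV tanh z :> (1 - tanh z ^ 2)" for z :: real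
    proof -
      have "cosh z \<noteq> 0" using cosh_real_pos[of z] by simp
      then show ?thesis
        using has_field_derivative_tanh[where g="\<lambda>x. x" and Db=1 and x=z, OF _ DERIV_ident] by simp
    qed
    obtain z where "tanh q - tanh p = (q - p) * (1 - tanh z ^ 2)"
      using MVT2[OF pq, of tanh "\<lambda>z. 1 - tanh z ^ 2"] deriv by blast
    moreover have "0 \<le> 1 - tanh z ^ 2" "1 - tanh z ^ 2 \<le> 1"
      using tanh_real_bounds[of z] by (auto simp: abs_square_le_1)
    ultimately show ?thesis using pq
      by (simp add: mult_left_le mult_nonneg_nonneg)
  qed
  show ?thesis
  proof (cases a b rule: linorder_cases)
    case less then show ?thesis using key[OF less] by simp
  next
    case equal then show ?thesis by simp
  next
    case greater then show ?thesis using key[OF greater] by simp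
  qed
qed

lemma vnorm_L2: "vnorm n x = L2_set x {..<n}"
  by (simp add: vnorm_def L2_set_def)

lemma frob: "vnorm m (matvec A n x) \<le> sqrt (\<Sum>r<m. \<Sum>c<n. (A r c)^2) * vnorm n x"
proof -
  have "\<And>r. (matvec A n x r)^2 \<le> (\<Sum>c<n. (A r c)^2) * (\<Sum>c<n. (x c)^2)"
  proof -
    fix r
    have "\<bar>matvec A n x r\<bar> \<le> (\<Sum>c<n. \<bar>A r c\<bar> * \<bar>x c\<bar>)"
      unfolding matvec_def by (rule order_trans[OF sum_abs]) (simp add: abs_mult)
    also have "\<dots> \<le> L2_set (A r) {..<n} * L2_set x {..<n}" by (rule L2_set_mult_ineq)
    finally have "\<bar>matvec A n x r\<bar>^2 \<le> (L2_set (A r) {..<n} * L2_set x {..<n})^2"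
      by (rule power_mono) simp
    then show "?thesis r"
      by (simp add: power_mult_distrib L2_set_def sum_nonneg)
  qed
  then have "(\<Sum>r<m. (matvec A n x r)^2) \<le> (\<Sum>r<m. \<Sum>c<n. (A r c)^2) * (\<Sum>c<n. (x c)^2)"
    by (simp add: sum_mono sum_distrib_right)
  then show ?thesis unfolding vnorm_def
    by (metis real_sqrt_le_iff real_sqrt_mult)
qed

lemma vnorm_nonneg: "0 \<le> vnorm n x" by (simp add: vnorm_def sum_nonneg)

lemma vnorm_div: "0 < s \<Longrightarrow> vnorm n (\<lambda>i. f i / s) = vnorm n f / s"
proof -
  assume s: "0 < s"
  have "(1/s) * L2_set f {..<n} = L2_set (\<lambda>i. 1/s * f i) {..<n}"
    by (rule L2_set_right_distrib) (use s in simp)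
  then show ?thesis by (simp add: vnorm_L2)
qed

lemma sigma_bound: "vnorm m (matvec A n x) \<le> sigma_max m n A * vnorm n x"
proof -
  define F where "F = sqrt (\<Sum>r<m. \<Sum>c<n. (A r c)^2)"
  have F0: "0 \<le> F" unfolding F_def by (simp add: sum_nonneg)
  have bdd: "bdd_above ((\<lambda>z. vnorm m (matvec A n z)) ` {z. vnorm n z \<le> 1})"
  proof (rule bdd_aboveI2)
    fix z assume "z \<in> {z. vnorm n z \<le> 1}"
    then have "vnorm n z \<le> 1" by simp
    then have "F * vnorm n z \<le> F" using F0 by (simp add: mult_left_le)
    then show "vnorm m (matvec A n z) \<le> F" using frob[of m A n z] unfolding F_def by linarith
  qed
  show ?thesis
  proof (cases "vnorm n x = 0")
    case True
    then show ?thesis using frob[of m A n x] vnorm_nonneg[of m "matvec A n x"] by simp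
  next
    case False
    define s where "s = vnorm n x"
    have s: "0 < s" using False vnorm_nonneg[of n x] unfolding s_def by simp
    define z where "z = (\<lambda>c. x c / s)"
    have vz: "vnorm n z = 1" unfolding z_def using vnorm_div[OF s, of n x] s unfolding s_def by simp
    have mz: "matvec A n z = (\<lambda>r. matvec A n x r / s)"
      unfolding z_def matvec_def by (simp add: sum_divide_distrib)
    have "vnorm m (matvec A n z) \<le> sigma_max m n A"
      unfolding sigma_max_def by (rule cSUP_upper[OF _ bdd]) (simp add: vz)
    then have "vnorm m (matvec A n x) / s \<le> sigma_max m n A"
      using mz vnorm_div[OF s, of m "matvec A n x"] by simp
    then show ?thesis using s unfolding s_def by (simp add: pos_divide_le_eq)
  qed
qed

lemma vnorm_step:
  assumes "\<forall>r<n. \<bar>e r\<bar> \<le> a * \<bar>p r\<bar> + b * \<bar>q r\<bar> + c * \<bar>s r\<bar>"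
    and "0 \<le> a" "0 \<le> b" "0 \<le> c"
  shows "vnorm n e \<le> a * vnorm n p + b * vnorm n q + c * vnorm n s"
proof -
  have ab: "vnorm n f = L2_set (\<lambda>r. \<bar>f r\<bar>) {..<n}" for f
    by (simp add: vnorm_def L2_set_def)
  have "vnorm n e \<le> L2_set (\<lambda>r. a * \<bar>p r\<bar> + b * \<bar>q r\<bar> + c * \<bar>s r\<bar>) {..<n}"
    unfolding ab by (rule L2_set_mono) (use assms in auto)
  also have "\<dots> \<le> L2_set (\<lambda>r. a * \<bar>p r\<bar> + b * \<bar>q r\<bar>) {..<n} + L2_set (\<lambda>r. c * \<bar>s r\<bar>) {..<n}"
    by (rule L2_set_triangle_ineq)
  also have "\<dots> \<le> L2_set (\<lambda>r. a * \<bar>p r\<bar>) {..<n} + L2_set (\<lambda>r. b * \<bar>q r\<bar>) {..<n} + L2_set (\<lambda>r. c * \<bar>s r\<bar>) {..<n}"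
    using L2_set_triangle_ineq[of "\<lambda>r. a * \<bar>p r\<bar>" "\<lambda>r. b * \<bar>q r\<bar>" "{..<n}"] by simp
  also have "\<dots> = a * vnorm n p + b * vnorm n q + c * vnorm n s"
    unfolding ab using assms by (simp add: L2_set_right_distrib)
  finally show ?thesis .
qed

lemma contr:
  fixes a b :: "nat \<Rightarrow> real"
  assumes a0: "\<forall>t. 0 \<le> a t" and r0: "0 \<le> \<rho>" and r1: "\<rho> < 1"
    and rec: "\<forall>t. a (Suc t) \<le> \<rho> * a t + b t" and b: "b \<longlonglongrightarrow> 0"
  shows "a \<longlonglongrightarrow> 0"
proof (rule LIMSEQ_I)
  fix \<epsilon> :: real assume e: "0 < \<epsilon>"
  define c where "c = \<epsilon> / 2"
  have c: "0 < c" using e by (simp add: c_def)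
  have "0 < (1 - \<rho>) * c" using r1 c by simp
  then obtain T where T: "\<forall>t\<ge>T. \<bar>b t\<bar> < (1 - \<rho>) * c"
    using b unfolding LIMSEQ_iff by (metis diff_zero real_norm_def)
  have ind: "a (T + n) \<le> \<rho> ^ n * a T + c" for n
  proof (induction n)
    case 0 then show ?case using c by simp
  next
    case (Suc n)
    have "a (T + Suc n) \<le> \<rho> * a (T + n) + b (T + n)" using rec by simp
    also have "\<dots> \<le> \<rho> * (\<rho> ^ n * a T + c) + (1 - \<rho>) * c"
      using mult_left_mono[OF Suc r0] T[rule_format, of "T+n"] by simp
    also have "\<dots> = \<rho> ^ Suc n * a T + c" by (simp add: algebra_simps)
    finally show ?case .
  qed
  have "(\<lambda>n. \<rho> ^ n * a T) \<longlonglongrightarrow> 0"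
    using LIMSEQ_power_zero[of \<rho>] r0 r1 by (auto intro: tendsto_mult_left_zero)
  then obtain N0 where N0: "\<forall>n\<ge>N0. \<bar>\<rho> ^ n * a T\<bar> < c"
    using c unfolding LIMSEQ_iff by (metis diff_zero real_norm_def)
  show "\<exists>no. \<forall>n\<ge>no. norm (a n - 0) < \<epsilon>"
  proof (intro exI allI impI)
    fix n assume n: "T + N0 \<le> n"
    then have "a n \<le> \<rho> ^ (n - T) * a T + c" using ind[of "n - T"] by simp
    moreover have "\<bar>\<rho> ^ (n - T) * a T\<bar> < c" using N0 n by simp
    moreover have "0 \<le> a n" using a0 by simp
    ultimately show "norm (a n - 0) < \<epsilon>" using c_def by simp
  qed
qed

lemma matvec_diff: "matvec A n x r - matvec A n y r = matvec A n (\<lambda>c. x c - y c) r"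
  by (simp add: matvec_def sum_subtractf right_diff_distrib)

lemma matvec_diff_fun: "(\<lambda>r. matvec A n x r - matvec A n y r) = matvec A n (\<lambda>c. x c - y c)"
  using matvec_diff by blast

lemma sigma_nonneg: "1 \<le> n \<Longrightarrow> 0 \<le> sigma_max m n A"
proof -
  assume n: "1 \<le> n"
  define z where "z = (\<lambda>c::nat. if c = 0 then 1 else (0::real))"
  have "(\<Sum>i<n. (z i)^2) = (\<Sum>i<n. if i = 0 then 1 else 0)"
    by (rule sum.cong) (auto simp: z_def)
  also have "\<dots> = 1" using n by (simp add: sum.delta)
  finally have "(\<Sum>i<n. (z i)^2) = 1" .
  then have "vnorm n z = 1" by (simp add: vnorm_def)
  then show ?thesis using sigma_bound[of m A n z] vnorm_nonneg[of m "matvec A n z"] by simp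
qed

theorem mainTheorem1:
  fixes K D :: nat and N M :: "nat \<Rightarrow> nat" and \<gamma> :: real
    and Wres Win Wenc :: "nat \<Rightarrow> nat \<Rightarrow> nat \<Rightarrow> real"
    and u :: "nat \<Rightarrow> nat \<Rightarrow> real"
    and x y :: "nat \<Rightarrow> nat \<Rightarrow> nat \<Rightarrow> real"
  assumes "K \<ge> 1" and "D \<ge> 1"
    and "\<forall>i\<in>{1..K}. N i \<ge> 1"
    and "\<forall>j\<in>{1..K-1}. M j \<ge> 1"
    and "0 < \<gamma>" and "\<gamma> \<le> 1"
    and "\<forall>i\<in>{1..K}. sigma_max (N i) (N i) (Wres i) < 1"
    and "deep_esn_traj K D N M \<gamma> Wres Win Wenc u x"
    and "deep_esn_traj K D N M \<gamma> Wres Win Wenc u y"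
  shows "\<forall>i\<in>{1..K}. (\<lambda>t. vnorm (N i) (\<lambda>r. x t i r - y t i r)) \<longlonglongrightarrow> 0"
proof -
  note g0 = assms(5) and g1 = assms(6)
  define \<sigma> where "\<sigma> i = sigma_max (N i) (N i) (Wres i)" for i
  define \<rho> where "\<rho> i = 1 - \<gamma> + \<gamma> * \<sigma> i" for i
  define d where "d j t = vnorm (N j) (\<lambda>r. x t j r - y t j r)" for j t
  define C where "C i = sqrt (\<Sum>r<N i. \<Sum>c<M (i-1). (Win i r c)^2)
      * sqrt (\<Sum>r<M (i-1). \<Sum>c<N (i-1). (Wenc (i-1) r c)^2)" for i
  have Hx: "\<And>t i r. i \<in> {1..K} \<Longrightarrow> r < N i \<Longrightarrow> x (Suc t) i r =
          (1 - \<gamma>) * x t i r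
          + \<gamma> * tanh (matvec (Wres i) (N i) (x t i) r
               + (if i = 1 then matvec (Win 1) D (u (Suc t)) r
                  else matvec (Win i) (M (i - 1))
                         (matvec (Wenc (i - 1)) (N (i - 1)) (x (Suc t) (i - 1))) r))"
    using assms(8) unfolding deep_esn_traj_def by blast
  have Hy: "\<And>t i r. i \<in> {1..K} \<Longrightarrow> r < N i \<Longrightarrow> y (Suc t) i r =
          (1 - \<gamma>) * y t i r
          + \<gamma> * tanh (matvec (Wres i) (N i) (y t i) r
               + (if i = 1 then matvec (Win 1) D (u (Suc t)) r
                  else matvec (Win i) (M (i - 1))
                         (matvec (Wenc (i - 1)) (N (i - 1)) (y (Suc t) (i - 1))) r))"
    using assms(9) unfolding deep_esn_traj_def by blast
  have rec: "d i (Suc t) \<le> \<rho> i * d i t + \<gamma> * (if i = 1 then 0 else C i * d (i-1) (Suc t))"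
    if i: "i \<in> {1..K}" for i t
  proof -
    define e where "e = (\<lambda>r. x t i r - y t i r)"
    define e1 where "e1 = (\<lambda>c. x (Suc t) (i-1) c - y (Suc t) (i-1) c)"
    define Z where "Z = (\<lambda>r. if i = 1 then 0 else
       matvec (Win i) (M (i-1)) (matvec (Wenc (i-1)) (N (i-1)) e1) r)"
    have comp: "\<forall>r<N i. \<bar>x (Suc t) i r - y (Suc t) i r\<bar> \<le>
        (1-\<gamma>) * \<bar>e r\<bar> + \<gamma> * \<bar>matvec (Wres i) (N i) e r\<bar> + \<gamma> * \<bar>Z r\<bar>"
    proof (intro allI impI)
      fix r assume r: "r < N i"
      define A where "A = matvec (Wres i) (N i) (x t i) r
               + (if i = 1 then matvec (Win 1) D (u (Suc t)) r
                  else matvec (Win i) (M (i - 1))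
                         (matvec (Wenc (i - 1)) (N (i - 1)) (x (Suc t) (i - 1))) r)"
      define B where "B = matvec (Wres i) (N i) (y t i) r
               + (if i = 1 then matvec (Win 1) D (u (Suc t)) r
                  else matvec (Win i) (M (i - 1))
                         (matvec (Wenc (i - 1)) (N (i - 1)) (y (Suc t) (i - 1))) r)"
      have AB: "A - B = matvec (Wres i) (N i) e r + Z r"
      proof (cases "i = 1")
        case True
        then show ?thesis unfolding A_def B_def Z_def e_def by (simp add: matvec_diff[symmetric])
      next
        case False
        have "A - B = (matvec (Wres i) (N i) (x t i) r - matvec (Wres i) (N i) (y t i) r)
           + (matvec (Win i) (M (i - 1)) (matvec (Wenc (i - 1)) (N (i - 1)) (x (Suc t) (i - 1))) r
              - matvec (Win i) (M (i - 1)) (matvec (Wenc (i - 1)) (N (i - 1)) (y (Suc t) (i - 1))) r)"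
          unfolding A_def B_def using False by simp
        also have "\<dots> = matvec (Wres i) (N i) e r + Z r"
          unfolding e_def Z_def e1_def using False by (simp add: matvec_diff matvec_diff_fun)
        finally show ?thesis .
      qed
      have "x (Suc t) i r - y (Suc t) i r = (1-\<gamma>) * e r + \<gamma> * (tanh A - tanh B)"
        using Hx[OF i r, of t] Hy[OF i r, of t] unfolding A_def B_def e_def
        by (simp add: algebra_simps)
      then have "\<bar>x (Suc t) i r - y (Suc t) i r\<bar> \<le> (1-\<gamma>) * \<bar>e r\<bar> + \<gamma> * \<bar>tanh A - tanh B\<bar>"
        using g0 g1 by (simp add: abs_mult order_trans[OF abs_triangle_ineq])
      also have "\<dots> \<le> (1-\<gamma>) * \<bar>e r\<bar> + \<gamma> * \<bar>A - B\<bar>"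
        using tanh_lip[of A B] g0 by simp
      also have "\<dots> \<le> (1-\<gamma>) * \<bar>e r\<bar> + \<gamma> * (\<bar>matvec (Wres i) (N i) e r\<bar> + \<bar>Z r\<bar>)"
        unfolding AB using g0 by (simp add: abs_triangle_ineq)
      finally show "\<bar>x (Suc t) i r - y (Suc t) i r\<bar> \<le>
        (1-\<gamma>) * \<bar>e r\<bar> + \<gamma> * \<bar>matvec (Wres i) (N i) e r\<bar> + \<gamma> * \<bar>Z r\<bar>"
        by (simp add: algebra_simps)
    qed
    have s1: "d i (Suc t) \<le> (1-\<gamma>) * vnorm (N i) e + \<gamma> * vnorm (N i) (matvec (Wres i) (N i) e)
                + \<gamma> * vnorm (N i) Z"
      unfolding d_def by (rule vnorm_step[OF comp]) (use g0 g1 in auto)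
    have s2: "vnorm (N i) (matvec (Wres i) (N i) e) \<le> \<sigma> i * d i t"
      unfolding \<sigma>_def d_def e_def by (rule sigma_bound)
    have s3: "vnorm (N i) Z \<le> (if i = 1 then 0 else C i * d (i-1) (Suc t))"
    proof (cases "i = 1")
      case True
      then show ?thesis unfolding Z_def by (simp add: vnorm_def)
    next
      case False
      have Z: "Z = matvec (Win i) (M (i-1)) (matvec (Wenc (i-1)) (N (i-1)) e1)"
        unfolding Z_def using False by simp
      have f2: "vnorm (M (i-1)) (matvec (Wenc (i-1)) (N (i-1)) e1)
         \<le> sqrt (\<Sum>r<M (i-1). \<Sum>c<N (i-1). (Wenc (i-1) r c)^2) * d (i-1) (Suc t)"
        unfolding d_def e1_def by (rule frob)
      have "vnorm (N i) Z \<le> sqrt (\<Sum>r<N i. \<Sum>c<M (i-1). (Win i r c)^2)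
          * vnorm (M (i-1)) (matvec (Wenc (i-1)) (N (i-1)) e1)"
        unfolding Z by (rule frob)
      also have "\<dots> \<le> C i * d (i-1) (Suc t)"
        unfolding C_def using mult_left_mono[OF f2, of "sqrt (\<Sum>r<N i. \<Sum>c<M (i-1). (Win i r c)^2)"]
        by (simp add: sum_nonneg mult.assoc)
      finally show ?thesis using False by simp
    qed
    have a: "\<gamma> * vnorm (N i) (matvec (Wres i) (N i) e) \<le> \<gamma> * (\<sigma> i * d i t)"
      using mult_left_mono[OF s2, of \<gamma>] g0 by simp
    have b: "\<gamma> * vnorm (N i) Z \<le> \<gamma> * (if i = 1 then 0 else C i * d (i-1) (Suc t))"
      using mult_left_mono[OF s3, of \<gamma>] g0 by simp
    have ed: "vnorm (N i) e = d i t" by (simp add: d_def e_def)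
    have "d i (Suc t) \<le> (1-\<gamma>) * d i t + \<gamma> * (\<sigma> i * d i t)
                + \<gamma> * (if i = 1 then 0 else C i * d (i-1) (Suc t))"
      using s1 a b unfolding ed by linarith
    then show ?thesis unfolding \<rho>_def by (simp add: algebra_simps)
  qed
  have lim: "Suc k \<le> K \<longrightarrow> d (Suc k) \<longlonglongrightarrow> 0" for k
  proof (induction k)
    case 0
    show ?case
    proof
      assume k: "Suc 0 \<le> K"
      have i: "Suc 0 \<in> {1..K}" using k by simp
      have sn: "0 \<le> \<sigma> (Suc 0)" "\<sigma> (Suc 0) < 1"
        using sigma_nonneg assms(3) assms(7) i unfolding \<sigma>_def by auto
      show "d (Suc 0) \<longlonglongrightarrow> 0"
      proof (rule contr[where \<rho> = "\<rho> (Suc 0)" and b = "\<lambda>t. 0"])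
        show "\<forall>t. 0 \<le> d (Suc 0) t" by (simp add: d_def vnorm_nonneg)
        show "0 \<le> \<rho> (Suc 0)" unfolding \<rho>_def using sn g0 g1 by simp
        show "\<rho> (Suc 0) < 1" unfolding \<rho>_def using sn g0 by simp
        show "\<forall>t. d (Suc 0) (Suc t) \<le> \<rho> (Suc 0) * d (Suc 0) t + 0"
          using rec[OF i] by simp
      qed simp
    qed
  next
    case (Suc k)
    show ?case
    proof
      assume k: "Suc (Suc k) \<le> K"
      have i: "Suc (Suc k) \<in> {1..K}" using k by simp
      have sn: "0 \<le> \<sigma> (Suc (Suc k))" "\<sigma> (Suc (Suc k)) < 1"
        using sigma_nonneg assms(3) assms(7) i unfolding \<sigma>_def by auto
      have prev: "d (Suc k) \<longlonglongrightarrow> 0" using Suc k by simp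
      have bl: "(\<lambda>t. \<gamma> * (C (Suc (Suc k)) * d (Suc k) (Suc t))) \<longlonglongrightarrow> 0"
        using LIMSEQ_Suc[OF prev] by (intro tendsto_mult_right_zero)
      show "d (Suc (Suc k)) \<longlonglongrightarrow> 0"
      proof (rule contr[where \<rho> = "\<rho> (Suc (Suc k))" and b = "\<lambda>t. \<gamma> * (C (Suc (Suc k)) * d (Suc k) (Suc t))"])
        show "\<forall>t. 0 \<le> d (Suc (Suc k)) t" by (simp add: d_def vnorm_nonneg)
        show "0 \<le> \<rho> (Suc (Suc k))" unfolding \<rho>_def using sn g0 g1 by simp
        show "\<rho> (Suc (Suc k)) < 1" unfolding \<rho>_def using sn g0 by simp
        show "\<forall>t. d (Suc (Suc k)) (Suc t) \<le> \<rho> (Suc (Suc k)) * d (Suc (Suc k)) t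
               + \<gamma> * (C (Suc (Suc k)) * d (Suc k) (Suc t))"
          using rec[OF i] by simp
      qed (rule bl)
    qed
  qed
  show ?thesis
  proof
    fix i assume i: "i \<in> {1..K}"
    then have "Suc (i - 1) \<le> K" "Suc (i - 1) = i" by auto
    then have "d i \<longlonglongrightarrow> 0" using lim[of "i - 1"] by simp
    then show "(\<lambda>t. vnorm (N i) (\<lambda>r. x t i r - y t i r)) \<longlonglongrightarrow> 0"
      unfolding d_def by simp
  qed
qed

end
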